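(* Let $M=T^*Q$ be the phase space of the complexified planar Kepler problem with symplectic form $\omega=dx_1\wedge dy_1+dx_2\wedge dy_2$ and functions $\xi_1,c_1,c_2,c_3,c_4$ as in the context. Let $V=\{p\in M: c_2(p)+ic_3(p)\neq 0\}$, on which $(\xi_1,c_1,c_3,c_4)$ serve as local coordinates. Then \[\omega|_V=\left(\Big(\frac{i}{c_1}-\frac{c_3}{c_1(c_2+ic_3)}\Big)dc_1-\frac{i}{\xi_1}d\xi_1\right)\wedge dc_3+\frac{c_1}{c_2+ic_3}\,dc_1\wedge dc_4.\]
   Context: Let $U=\{(x_1,x_2)\in\mathbb{C}^2: x_1^2+x_2^2\neq 0\}$ and write $\xi_1=x_1+ix_2$, $\xi_2=x_1-ix_2$, so $\xi_1\xi_2=x_1^2+x_2^2\neq0$ on $U$. Take two copies $Q_I,Q_{II}$ of $U$. For each fixed $\xi_2\neq 0$, cut both $\xi_1$-slices $\mathbb{C}\setminus\{0\}$ along the half-line $\{\xi_1=t\xi_2^{-1}: t<0\}$ and glue them crosswise (upper edge of sheet $I$ to lower edge of sheet $II$ and vice versa), as for the Riemann surface of a square root; letting $\xi_2$ vary gives a complex $2$-manifold $Q$, whose points are written $(\xi_1,\xi_2)_k$, $k\in\{I,II\}$. Define $c_1=\sqrt{\xi_1\xi_2}$ (principal branch, argument in $(-\pi/2,\pi/2]$) on $Q_I$ and $c_1=-\sqrt{\xi_1\xi_2}$ on $Q_{II}$, a holomorphic square root of $x_1^2+x_2^2$ on $Q$. The phase space is $M=T^*Q\cong Q\times\mathbb{C}^2$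 with fiber coordinates $(y_1,y_2)$; set $\eta_1=y_1+iy_2$, $\eta_2=y_1-iy_2$, and $c_2=\xi_1\eta_2$, $c_3=\frac{i}{2}(\xi_1\eta_2-\xi_2\eta_1)=x_1y_2-x_2y_1$ (angular momentum), $c_4=\frac12\eta_1\eta_2-\frac1{c_1}=\frac12(y_1^2+y_2^2)-\frac1{c_1}$ (Kepler Hamiltonian). These satisfy $2c_4c_1^2+2c_1=c_2^2+2ic_3c_2$. *)

theory Defs
  imports "HOL-Analysis.Analysis"
begin

text \<open>Points of M = T*Q are written (x1,x2,y1,y2) together with a sheet label k.
  Base point (x1,x2) in U, i.e. x1^2+x2^2 \<noteq> 0.\<close>

datatype sheet = SheetI | SheetII

type_synonym mpt = "complex \<times> complex \<times> complex \<times> complex"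

definition xi1 :: "mpt \<Rightarrow> complex" where
  "xi1 w = (case w of (x1,x2,y1,y2) \<Rightarrow> x1 + \<i> * x2)"
definition xi2 :: "mpt \<Rightarrow> complex" where
  "xi2 w = (case w of (x1,x2,y1,y2) \<Rightarrow> x1 - \<i> * x2)"
definition eta1 :: "mpt \<Rightarrow> complex" where
  "eta1 w = (case w of (x1,x2,y1,y2) \<Rightarrow> y1 + \<i> * y2)"
definition eta2 :: "mpt \<Rightarrow> complex" where
  "eta2 w = (case w of (x1,x2,y1,y2) \<Rightarrow> y1 - \<i> * y2)"

text \<open>c1 on Q: principal square root (csqrt has argument in (-pi/2, pi/2]) on sheet I,
  its negative on sheet II.\<close>
definition c1 :: "complex \<Rightarrow> complex \<Rightarrow> sheet \<Rightarrow> complex" where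
  "c1 x1 x2 k = (if k = SheetI then csqrt ((x1 + \<i>*x2) * (x1 - \<i>*x2))
                 else - csqrt ((x1 + \<i>*x2) * (x1 - \<i>*x2)))"

definition c2 :: "mpt \<Rightarrow> complex" where
  "c2 w = xi1 w * eta2 w"

definition c3 :: "mpt \<Rightarrow> complex" where
  "c3 w = (\<i>/2) * (xi1 w * eta2 w - xi2 w * eta1 w)"

text \<open>c4 = (1/2) eta1 eta2 - 1/c1, with c1 given in the local chart by a function C1 of (x1,x2).\<close>
definition c4_loc :: "(complex \<times> complex \<Rightarrow> complex) \<Rightarrow> mpt \<Rightarrow> complex" where
  "c4_loc C1 w = (case w of (x1,x2,y1,y2) \<Rightarrow> eta1 w * eta2 w / 2 - 1 / C1 (x1,x2))"

definition omega :: "mpt \<Rightarrow> mpt \<Rightarrow> complex" where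
  "omega u v = (case u of (a1,a2,b1,b2) \<Rightarrow> case v of (a1',a2',b1',b2') \<Rightarrow>
      a1*b1' - a1'*b1 + a2*b2' - a2'*b2)"

definition wedge :: "(mpt \<Rightarrow> complex) \<Rightarrow> (mpt \<Rightarrow> complex) \<Rightarrow> mpt \<Rightarrow> mpt \<Rightarrow> complex" where
  "wedge \<alpha> \<beta> u v = \<alpha> u * \<beta> v - \<alpha> v * \<beta> u"

end

theory Submission
  imports Defs
begin

lemma final_alg:
  fixes x1 x2 y1 y2 a1 a2 b1 b2 e1 e2 f1 f2 c q :: complex
  assumes cc: "c*c = (x1 + \<i>*x2)*(x1 - \<i>*x2)" and c0: "c \<noteq> 0"
    and xi0: "x1 + \<i>*x2 \<noteq> 0" and q: "q = (x1 + \<i>*x2)*(y1 - \<i>*y2) + \<i>*(x1*y2 - x2*y1)"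
    and q0: "q \<noteq> 0"
  shows "a1*f1 - e1*b1 + a2*f2 - e2*b2 =
    ((\<i>/c - (x1*y2 - x2*y1)/(c*q)) * ((x1*a1+x2*a2)/c) - (\<i>/(x1 + \<i>*x2))*(a1+\<i>*a2)) * (e1*y2+x1*f2-e2*y1-x2*f1)
  - ((\<i>/c - (x1*y2 - x2*y1)/(c*q)) * ((x1*e1+x2*e2)/c) - (\<i>/(x1 + \<i>*x2))*(e1+\<i>*e2)) * (a1*y2+x1*b2-a2*y1-x2*b1)
  + ((c/q * ((x1*a1+x2*a2)/c)) * (y1*f1+y2*f2 + ((x1*e1+x2*e2)/c)/(c*c))
  - (c/q * ((x1*e1+x2*e2)/c)) * (y1*b1+y2*b2 + ((x1*a1+x2*a2)/c)/(c*c)))"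
proof -
  define xi where "xi = x1 + \<i>*x2"
  define xj where "xj = x1 - \<i>*x2"
  define C3 where "C3 = x1*y2 - x2*y1"
  define LC3 where "LC3 = (x1*a1+x2*a2)*(e1*y2+x1*f2-e2*y1-x2*f1) - (x1*e1+x2*e2)*(a1*y2+x1*b2-a2*y1-x2*b1)"
  define XC3 where "XC3 = (a1+\<i>*a2)*(e1*y2+x1*f2-e2*y1-x2*f1) - (e1+\<i>*e2)*(a1*y2+x1*b2-a2*y1-x2*b1)"
  define LY where "LY = (x1*a1+x2*a2)*(y1*f1+y2*f2) - (x1*e1+x2*e2)*(y1*b1+y2*b2)"
  define Om where "Om = a1*f1 - e1*b1 + a2*f2 - e2*b2"
  have P: "xi*xj*q*Om = (\<i>*q - C3)*LC3 - \<i>*xj*q*XC3 + xi*xj*LY"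
    unfolding xi_def xj_def q C3_def LC3_def XC3_def LY_def Om_def
    by (simp add: algebra_simps)
  have xj0: "xj \<noteq> 0" using cc c0 unfolding xj_def by auto
  have R: "((\<i>/c - C3/(c*q)) * ((x1*a1+x2*a2)/c) - (\<i>/xi)*(a1+\<i>*a2)) * (e1*y2+x1*f2-e2*y1-x2*f1)
  - ((\<i>/c - C3/(c*q)) * ((x1*e1+x2*e2)/c) - (\<i>/xi)*(e1+\<i>*e2)) * (a1*y2+x1*b2-a2*y1-x2*b1)
  + (c/q * ((x1*a1+x2*a2)/c)) * (y1*f1+y2*f2 + ((x1*e1+x2*e2)/c)/(c*c))
  - (c/q * ((x1*e1+x2*e2)/c)) * (y1*b1+y2*b2 + ((x1*a1+x2*a2)/c)/(c*c))
   = (\<i>*q - C3)*LC3/(c*c*q) - \<i>/xi*XC3 + LY/q"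
    unfolding LC3_def XC3_def LY_def using c0 q0 xi0[folded xi_def]
    by (simp add: field_simps power2_eq_square) (simp add: algebra_simps)?
  also have "\<dots> = ((\<i>*q - C3)*LC3 - \<i>*xj*q*XC3 + xi*xj*LY)/(xi*xj*q)"
    using cc[folded xi_def xj_def] q0 xi0[folded xi_def] xj0 by (simp add: field_simps)
  also have "\<dots> = Om" using P q0 xi0[folded xi_def] xj0 by (simp add: field_simps)
  finally show ?thesis unfolding Om_def xi_def C3_def add_diff_eq by (rule sym)
qed

theorem proposition2:
  fixes x1 x2 y1 y2 :: complex and k :: sheet
    and W :: "(complex \<times> complex) set" and C1 :: "complex \<times> complex \<Rightarrow> complex"
    and DXi1 DC1 DC3 DC4 :: "mpt \<Rightarrow> complex" and u v :: mpt
  assumes inU: "x1^2 + x2^2 \<noteq> 0"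
    and inV: "c2 (x1,x2,y1,y2) + \<i> * c3 (x1,x2,y1,y2) \<noteq> 0"
    and chart: "open W" "(x1,x2) \<in> W" "continuous_on W C1"
      "\<forall>z\<in>W. (C1 z)^2 = (fst z)^2 + (snd z)^2" "C1 (x1,x2) = c1 x1 x2 k"
    and dxi1: "(xi1 has_derivative DXi1) (at (x1,x2,y1,y2))"
    and dc1: "((\<lambda>(a,b,c,d). C1 (a,b)) has_derivative DC1) (at (x1,x2,y1,y2))"
    and dc3: "(c3 has_derivative DC3) (at (x1,x2,y1,y2))"
    and dc4: "(c4_loc C1 has_derivative DC4) (at (x1,x2,y1,y2))"
  shows "omega u v =
    wedge (\<lambda>h. (\<i> / c1 x1 x2 k - c3 (x1,x2,y1,y2)
                    / (c1 x1 x2 k * (c2 (x1,x2,y1,y2) + \<i> * c3 (x1,x2,y1,y2)))) * DC1 h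
               - (\<i> / xi1 (x1,x2,y1,y2)) * DXi1 h) DC3 u v
  + wedge (\<lambda>h. c1 x1 x2 k / (c2 (x1,x2,y1,y2) + \<i> * c3 (x1,x2,y1,y2)) * DC1 h) DC4 u v"
proof -
  define p0 :: mpt where "p0 = (x1,x2,y1,y2)"
  define g :: "mpt \<Rightarrow> complex" where "g = (\<lambda>(a,b,c,d). C1 (a,b))"
  define c where "c = c1 x1 x2 k"
  have gfs: "g = (\<lambda>w. C1 (fst w, fst (snd w)))" unfolding g_def by (auto simp: case_prod_beta)
  have gp0: "g p0 = c" unfolding gfs p0_def c_def using chart(5) by simp
  have cc: "c*c = x1^2 + x2^2" using chart(4) chart(2) chart(5) unfolding c_def
    by (metis fst_conv snd_conv power2_eq_square)
  have c0: "c \<noteq> 0" using cc inU by auto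
  have dg: "(g has_derivative DC1) (at p0)" using dc1 unfolding g_def p0_def .
  have xi1e: "xi1 = (\<lambda>w. fst w + \<i> * fst (snd w))" by (auto simp: xi1_def fun_eq_iff split: prod.splits)
  have "((\<lambda>w::mpt. fst w + \<i> * fst (snd w)) has_derivative (\<lambda>h. fst h + \<i> * fst (snd h))) (at p0)"
    by (auto intro!: derivative_eq_intros)
  then have DX: "DXi1 = (\<lambda>h. fst h + \<i> * fst (snd h))"
    using dxi1 has_derivative_unique unfolding xi1e p0_def by blast
  have c3e: "c3 = (\<lambda>w. fst w * snd (snd (snd w)) - fst (snd w) * fst (snd (snd w)))"
    by (auto simp: c3_def xi1_def xi2_def eta1_def eta2_def fun_eq_iff field_simps split: prod.splits)
  have "((\<lambda>w::mpt. fst w * snd (snd (snd w)) - fst (snd w) * fst (snd (snd w))) has_derivative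
     (\<lambda>h. fst h * y2 + x1 * snd (snd (snd h)) - fst (snd h) * y1 - x2 * fst (snd (snd h)))) (at p0)"
    unfolding p0_def by (auto intro!: derivative_eq_intros simp: algebra_simps)
  then have D3: "DC3 = (\<lambda>h. fst h * y2 + x1 * snd (snd (snd h)) - fst (snd h) * y1 - x2 * fst (snd (snd h)))"
    using dc3 has_derivative_unique unfolding c3e p0_def by blast
  define S where "S = (\<lambda>w::mpt. (fst w, fst (snd w))) -` W"
  have Sopen: "open S" unfolding S_def
    by (rule open_vimage[OF chart(1)]) (auto intro!: continuous_intros)
  have p0S: "p0 \<in> S" unfolding S_def p0_def using chart(2) by simp
  have "((\<lambda>w. g w * g w) has_derivative (\<lambda>h. g p0 * DC1 h + DC1 h * g p0)) (at p0)"
    using dg by (auto intro!: derivative_eq_intros)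
  then have "((\<lambda>w::mpt. fst w * fst w + fst (snd w) * fst (snd w)) has_derivative (\<lambda>h. g p0 * DC1 h + DC1 h * g p0)) (at p0)"
  proof (rule has_derivative_transform_within_open[OF _ Sopen p0S])
    fix w assume "w \<in> S"
    then have "(fst w, fst (snd w)) \<in> W" unfolding S_def by simp
    then show "g w * g w = fst w * fst w + fst (snd w) * fst (snd w)"
      using chart(4) unfolding gfs by (metis fst_conv snd_conv power2_eq_square)
  qed
  moreover have "((\<lambda>w::mpt. fst w * fst w + fst (snd w) * fst (snd w)) has_derivative
     (\<lambda>h. 2 * x1 * fst h + 2 * x2 * fst (snd h))) (at p0)"
    unfolding p0_def by (auto intro!: derivative_eq_intros simp: algebra_simps)
  ultimately have Eq: "(\<lambda>h. g p0 * DC1 h + DC1 h * g p0) = (\<lambda>h. 2 * x1 * fst h + 2 * x2 * fst (snd h))"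
    using has_derivative_unique by blast
  have D1: "DC1 = (\<lambda>h. (x1 * fst h + x2 * fst (snd h)) / c)"
  proof
    fix h
    from fun_cong[OF Eq, of h] have "2 * (c * DC1 h) = 2 * (x1 * fst h + x2 * fst (snd h))"
      unfolding gp0 by (simp add: algebra_simps)
    then have "c * DC1 h = x1 * fst h + x2 * fst (snd h)" by (simp only: mult_left_cancel[of 2] zero_neq_numeral[symmetric] not_False_eq_True)
    then show "DC1 h = (x1 * fst h + x2 * fst (snd h)) / c" using c0 by (simp add: field_simps)
  qed
  have c4e: "c4_loc C1 = (\<lambda>w. (fst (snd (snd w)) * fst (snd (snd w)) + snd (snd (snd w)) * snd (snd (snd w)))/2 - 1 / g w)"
    by (auto simp: c4_loc_def gfs eta1_def eta2_def fun_eq_iff algebra_simps split: prod.splits)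
  have "((\<lambda>w. (fst (snd (snd w)) * fst (snd (snd w)) + snd (snd (snd w)) * snd (snd (snd w)))/2 - 1 / g w) has_derivative
      (\<lambda>h. y1 * fst (snd (snd h)) + y2 * snd (snd (snd h)) + DC1 h / (c * c))) (at p0)"
    using dg gp0 c0 unfolding p0_def
    apply (intro derivative_eq_intros)
    apply (simp_all add: gp0)
    apply (simp add: fun_eq_iff field_simps)
    done
  then have D4: "DC4 = (\<lambda>h. y1 * fst (snd (snd h)) + y2 * snd (snd (snd h)) + DC1 h / (c * c))"
    using dc4 has_derivative_unique unfolding c4e p0_def by blast
  obtain a1 a2 b1 b2 where u: "u = (a1,a2,b1,b2)" by (cases u) auto
  obtain e1 e2 f1 f2 where v: "v = (e1,e2,f1,f2)" by (cases v) auto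
  have sE: "c2 (x1,x2,y1,y2) + \<i> * c3 (x1,x2,y1,y2) = (x1 + \<i>*x2)*(y1 - \<i>*y2) + \<i>*(x1*y2 - x2*y1)"
    by (simp add: c2_def c3e xi1_def eta2_def)
  have c3v: "c3 (x1,x2,y1,y2) = x1*y2 - x2*y1" by (simp add: c3e)
  have xe: "x1^2 + x2^2 = (x1 + \<i>*x2)*(x1 - \<i>*x2)" by (simp add: algebra_simps power2_eq_square)
  have xi0: "x1 + \<i>*x2 \<noteq> 0" using inU unfolding xe by auto
  have cc': "c*c = (x1 + \<i>*x2)*(x1 - \<i>*x2)" using cc by (simp add: algebra_simps power2_eq_square)
  have xi1v: "xi1 (x1,x2,y1,y2) = x1 + \<i>*x2" by (simp add: xi1_def)
  show ?thesis
    unfolding c_def[symmetric] omega_def wedge_def DX D1 D3 D4 u v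
    unfolding sE
    unfolding c3v xi1v
    apply (simp only: prod.case fst_conv snd_conv)
    by (rule final_alg[OF cc' c0 xi0 refl inV[unfolded sE]])
qed

end
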